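(* In the GCSA-NA construction (context), for $l\in[\ell],k\in[K_c]$ let $\mathbf{C}^{l,k}_1,\dots,\mathbf{C}^{l,k}_{R'+p-1}\in\mathbb{F}^{\frac{\lambda}{m}\times\frac{\mu}{n}}$ be defined by $\mathbf{C}^{l,k}_{i+1}=\sum \mathbf{A}^{l,k}_{m',p'}\mathbf{B}^{l,k}_{p'',n''}$, the sum over all $(m',p',p'',n'')\in[m]\times[p]\times[p]\times[n]$ with $p'-1+p(m'-1)+p-p''+pm(n''-1)=i$, so that $P_s^{l,k}Q_s^{l,k}=\sum_{i=0}^{R'+p-2}\mathbf{C}^{l,k}_{i+1}(f_{l,k}-\alpha_s)^i$. Then: (a) For all $m'\in[m],n''\in[n]$, $\mathbf{C}^{l,k}_{p+p(m'-1)+pm(n''-1)}=\sum_{p'\in[p]}\mathbf{A}^{l,k}_{m',p'}\mathbf{B}^{l,k}_{p',n''}$, the $(m',n'')$ block of $\mathbf{A}^{l,k}\mathbf{B}^{l,k}$. (b) There exist matrices $I_1,\dots,I_{R'K_c+2X-1}\in\mathbb{F}^{\frac{\lambda}{m}\times\frac{\mu}{n}}$, not depending on $s$, each a function of $(\mathbf{A},\mathbf{B},\mathbf{Z}^A_{\cdot,\cdot},\mathbf{Z}^B_{\cdot,\cdot})$, with $I_x$ a function of $(\mathbf{Z}^A_{\cdot,\cdot},\mathbf{Z}^B_{\cdot,\cdot})$ alone whenever $x>R'(K_c-1)+X+D_E$, such that for every $s\in[S]$, $$Y_s=\sum_{l\in[\ell]}\sum_{k\in[K_c]}\sum_{i=0}^{R'-1}\frac{\sum_{i'=0}^{i}c_{l,k,i-i'}\mathbf{D}^{l,k}_{i'+1}}{(f_{l,k}-\alpha_s)^{R'-i}}+\sum_{x\in[R'K_c+2X-1]}\alpha_s^{x-1}J_x,$$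 where $\mathbf{D}^{l,k}_i=\mathbf{C}^{l,k}_i+\mathbf{Z}''_{l,k,i}$ for $i\in[R']$, $J_x=I_x+\mathbf{Z}'_x$ for $x\in[R'(K_c-1)+X+D_E]$, and $J_x=I_x$ for $R'(K_c-1)+X+D_E<x\le R'K_c+2X-1$.
   Context: GCSA-NA construction. Let $\mathbb{F}$ be a finite field and $S,X,\ell,K_c,p,m,n,\lambda,\kappa,\mu$ positive integers with $m\mid\lambda$, $p\mid\kappa$, $n\mid\mu$, $L=\ell K_c\le|\mathbb{F}|-S$. Inputs $\mathbf{A}^{l,k}\in\mathbb{F}^{\lambda\times\kappa}$, $\mathbf{B}^{l,k}\in\mathbb{F}^{\kappa\times\mu}$ ($l\in[\ell],k\in[K_c]$). Partition $\mathbf{A}^{l,k}$ into an $m\times p$ grid of blocks $\mathbf{A}^{l,k}_{i,j}\in\mathbb{F}^{\frac{\lambda}{m}\times\frac{\kappa}{p}}$ and $\mathbf{B}^{l,k}$ into a $p\times n$ grid of blocks $\mathbf{B}^{l,k}_{i,j}\in\mathbb{F}^{\frac{\kappa}{p}\times\frac{\mu}{n}}$. Fix $S+L$ distinct elements $f_{1,1},\dots,f_{\ell,K_c},\alpha_1,\dots,\alpha_S\in\mathbb{F}$. Let $R'=pmn$, $D_E=\max(pm,\,pmn-pm+p)-1$, $\mathcal{E}=\{p+p(m'-1)+pm(n''-1): m'\in[m],n''\in[n]\}$, and $\Delta_s^{l}=\prod_{k\in[K_c]}(f_{l,k}-\alpha_s)^{R'}$. Let $c_{l,k,i}$ be the coefficients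 of $\Psi_{l,k}(\alpha)=\prod_{k'\in[K_c]\setminus\{k\}}(\alpha+f_{l,k'}-f_{l,k})^{R'}=\sum_{i=0}^{R'(K_c-1)}c_{l,k,i}\alpha^i$, with $c_{l,k,i}=0$ for $i>R'(K_c-1)$. $P_s^{l,k}=\sum_{m'\in[m]}\sum_{p'\in[p]}\mathbf{A}^{l,k}_{m',p'}(f_{l,k}-\alpha_s)^{p'-1+p(m'-1)}$, $Q_s^{l,k}=\sum_{p''\in[p]}\sum_{n''\in[n]}\mathbf{B}^{l,k}_{p'',n''}(f_{l,k}-\alpha_s)^{p-p''+pm(n''-1)}$. Noise matrices $\mathbf{Z}^A_{l,x}\in\mathbb{F}^{\frac{\lambda}{m}\times\frac{\kappa}{p}}$, $\mathbf{Z}^B_{l,x}\in\mathbb{F}^{\frac{\kappa}{p}\times\frac{\mu}{n}}$ ($l\in[\ell],x\in[X]$); $\mathbf{Z}'_i\in\mathbb{F}^{\frac{\lambda}{m}\times\frac{\mu}{n}}$ ($i\in[R'(K_c-1)+X+D_E]$); $\mathbf{Z}''_{l,k,i}\in\mathbb{F}^{\frac{\lambda}{m}\times\frac{\mu}{n}}$ ($i\in[R']$) with $\mathbf{Z}''_{l,k,i}=\mathbf{0}$ for $i\in\mathcal{E}$ (arbitrary otherwise). $\widetilde{A}^s_l=\Delta_s^{l}\big(\sum_{k\in[K_c]}\frac{P_s^{l,k}}{(f_{l,k}-\alpha_s)^{R'}}+\sum_{x\in[X]}\alpha_s^{x-1}\mathbf{Z}^A_{l,x}\big)$, $\widetilde{B}^s_l=\sum_{k\in[K_c]}\frac{Q_s^{l,k}}{(f_{l,k}-\alpha_s)^{R'}}+\sum_{x\in[X]}\alpha_s^{x-1}\mathbf{Z}^B_{l,x}$,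 $\widetilde{M}_s=\sum_{x\in[R'(K_c-1)+X+D_E]}\alpha_s^{x-1}\mathbf{Z}'_x+\sum_{l\in[\ell]}\sum_{k\in[K_c]}\sum_{i=0}^{R'-1}\frac{\sum_{i'=0}^{i}c_{l,k,i-i'}\mathbf{Z}''_{l,k,i'+1}}{(f_{l,k}-\alpha_s)^{R'-i}}$, and $Y_s=\sum_{l\in[\ell]}\widetilde{A}^s_l\widetilde{B}^s_l+\widetilde{M}_s$. *)

theory Defs
  imports "HOL-Computational_Algebra.Polynomial"
begin

text \<open>Matrices are represented entrywise as functions nat => nat => 'a with 0-based
  row/column indices; only entries inside the stated dimensions are meaningful.
  All block / matrix indices of the paper ([m] = {1..m}) are 1-based as in the paper.\<close>

type_synonym 'a fmat = "nat \<Rightarrow> nat \<Rightarrow> 'a"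

definition blk :: "nat \<Rightarrow> nat \<Rightarrow> 'a fmat \<Rightarrow> nat \<Rightarrow> nat \<Rightarrow> 'a fmat" where
  "blk rs cs M i j = (\<lambda>r c. M ((i - 1) * rs + r) ((j - 1) * cs + c))"

definition mmul :: "nat \<Rightarrow> 'a::comm_semiring_1 fmat \<Rightarrow> 'a fmat \<Rightarrow> 'a fmat" where
  "mmul d M N = (\<lambda>r c. \<Sum>t<d. M r t * N t c)"

definition Rp :: "nat \<Rightarrow> nat \<Rightarrow> nat \<Rightarrow> nat" where
  "Rp p m n = p * m * n"

definition DE :: "nat \<Rightarrow> nat \<Rightarrow> nat \<Rightarrow> nat" where
  "DE p m n = max (p * m) (p * m * n - p * m + p) - 1"

definition Eset :: "nat \<Rightarrow> nat \<Rightarrow> nat \<Rightarrow> nat set" where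
  "Eset p m n = {p + p * (m' - 1) + p * m * (n'' - 1) | m' n''. m' \<in> {1..m} \<and> n'' \<in> {1..n}}"

definition Delta :: "nat \<Rightarrow> nat \<Rightarrow> (nat \<Rightarrow> nat \<Rightarrow> 'a::field) \<Rightarrow> nat \<Rightarrow> 'a \<Rightarrow> 'a" where
  "Delta Kc R f l a = (\<Prod>k\<in>{1..Kc}. (f l k - a) ^ R)"

definition Psi :: "nat \<Rightarrow> nat \<Rightarrow> (nat \<Rightarrow> nat \<Rightarrow> 'a::field) \<Rightarrow> nat \<Rightarrow> nat \<Rightarrow> 'a poly" where
  "Psi Kc R f l k = (\<Prod>k'\<in>{1..Kc} - {k}. [:f l k' - f l k, 1:] ^ R)"

definition cc :: "nat \<Rightarrow> nat \<Rightarrow> (nat \<Rightarrow> nat \<Rightarrow> 'a::field) \<Rightarrow> nat \<Rightarrow> nat \<Rightarrow> nat \<Rightarrow> 'a" where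
  "cc Kc R f l k i = coeff (Psi Kc R f l k) i"

definition Pmat :: "nat \<Rightarrow> nat \<Rightarrow> nat \<Rightarrow> nat \<Rightarrow> (nat \<Rightarrow> nat \<Rightarrow> 'a::field) \<Rightarrow> (nat \<Rightarrow> 'a)
    \<Rightarrow> (nat \<Rightarrow> nat \<Rightarrow> 'a fmat) \<Rightarrow> nat \<Rightarrow> nat \<Rightarrow> nat \<Rightarrow> 'a fmat" where
  "Pmat p m lam kap f \<alpha> A l k s = (\<lambda>r c. \<Sum>m'\<in>{1..m}. \<Sum>p'\<in>{1..p}.
      blk (lam div m) (kap div p) (A l k) m' p' r c * (f l k - \<alpha> s) ^ (p' - 1 + p * (m' - 1)))"

definition Qmat :: "nat \<Rightarrow> nat \<Rightarrow> nat \<Rightarrow> nat \<Rightarrow> nat \<Rightarrow> (nat \<Rightarrow> nat \<Rightarrow> 'a::field) \<Rightarrow> (nat \<Rightarrow> 'a)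
    \<Rightarrow> (nat \<Rightarrow> nat \<Rightarrow> 'a fmat) \<Rightarrow> nat \<Rightarrow> nat \<Rightarrow> nat \<Rightarrow> 'a fmat" where
  "Qmat p m n kap mu f \<alpha> B l k s = (\<lambda>r c. \<Sum>p''\<in>{1..p}. \<Sum>n''\<in>{1..n}.
      blk (kap div p) (mu div n) (B l k) p'' n'' r c * (f l k - \<alpha> s) ^ (p - p'' + p * m * (n'' - 1)))"

definition Atil :: "nat \<Rightarrow> nat \<Rightarrow> nat \<Rightarrow> nat \<Rightarrow> nat \<Rightarrow> nat \<Rightarrow> nat \<Rightarrow> (nat \<Rightarrow> nat \<Rightarrow> 'a::field)
    \<Rightarrow> (nat \<Rightarrow> 'a) \<Rightarrow> (nat \<Rightarrow> nat \<Rightarrow> 'a fmat) \<Rightarrow> (nat \<Rightarrow> nat \<Rightarrow> 'a fmat) \<Rightarrow> nat \<Rightarrow> nat \<Rightarrow> 'a fmat" where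
  "Atil p m n lam kap X Kc f \<alpha> A ZA l s = (\<lambda>r c. Delta Kc (Rp p m n) f l (\<alpha> s) *
      ((\<Sum>k\<in>{1..Kc}. Pmat p m lam kap f \<alpha> A l k s r c / (f l k - \<alpha> s) ^ Rp p m n)
       + (\<Sum>x\<in>{1..X}. \<alpha> s ^ (x - 1) * ZA l x r c)))"

definition Btil :: "nat \<Rightarrow> nat \<Rightarrow> nat \<Rightarrow> nat \<Rightarrow> nat \<Rightarrow> nat \<Rightarrow> nat \<Rightarrow> (nat \<Rightarrow> nat \<Rightarrow> 'a::field)
    \<Rightarrow> (nat \<Rightarrow> 'a) \<Rightarrow> (nat \<Rightarrow> nat \<Rightarrow> 'a fmat) \<Rightarrow> (nat \<Rightarrow> nat \<Rightarrow> 'a fmat) \<Rightarrow> nat \<Rightarrow> nat \<Rightarrow> 'a fmat" where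
  "Btil p m n kap mu X Kc f \<alpha> B ZB l s = (\<lambda>r c.
      (\<Sum>k\<in>{1..Kc}. Qmat p m n kap mu f \<alpha> B l k s r c / (f l k - \<alpha> s) ^ Rp p m n)
       + (\<Sum>x\<in>{1..X}. \<alpha> s ^ (x - 1) * ZB l x r c))"

definition Mtil :: "nat \<Rightarrow> nat \<Rightarrow> nat \<Rightarrow> nat \<Rightarrow> nat \<Rightarrow> nat \<Rightarrow> (nat \<Rightarrow> nat \<Rightarrow> 'a::field)
    \<Rightarrow> (nat \<Rightarrow> 'a) \<Rightarrow> (nat \<Rightarrow> 'a fmat) \<Rightarrow> (nat \<Rightarrow> nat \<Rightarrow> nat \<Rightarrow> 'a fmat) \<Rightarrow> nat \<Rightarrow> 'a fmat" where
  "Mtil p m n X ell Kc f \<alpha> Z' Z'' s = (\<lambda>r c.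
      (\<Sum>x\<in>{1..Rp p m n * (Kc - 1) + X + DE p m n}. \<alpha> s ^ (x - 1) * Z' x r c)
      + (\<Sum>l\<in>{1..ell}. \<Sum>k\<in>{1..Kc}. \<Sum>i<Rp p m n.
           (\<Sum>i'\<le>i. cc Kc (Rp p m n) f l k (i - i') * Z'' l k (i' + 1) r c)
             / (f l k - \<alpha> s) ^ (Rp p m n - i)))"

definition Ymat :: "nat \<Rightarrow> nat \<Rightarrow> nat \<Rightarrow> nat \<Rightarrow> nat \<Rightarrow> nat \<Rightarrow> nat \<Rightarrow> nat \<Rightarrow> nat
    \<Rightarrow> (nat \<Rightarrow> nat \<Rightarrow> 'a::field) \<Rightarrow> (nat \<Rightarrow> 'a)
    \<Rightarrow> (nat \<Rightarrow> nat \<Rightarrow> 'a fmat) \<Rightarrow> (nat \<Rightarrow> nat \<Rightarrow> 'a fmat)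
    \<Rightarrow> (nat \<Rightarrow> nat \<Rightarrow> 'a fmat) \<Rightarrow> (nat \<Rightarrow> nat \<Rightarrow> 'a fmat)
    \<Rightarrow> (nat \<Rightarrow> 'a fmat) \<Rightarrow> (nat \<Rightarrow> nat \<Rightarrow> nat \<Rightarrow> 'a fmat) \<Rightarrow> nat \<Rightarrow> 'a fmat" where
  "Ymat p m n lam kap mu X ell Kc f \<alpha> A B ZA ZB Z' Z'' s = (\<lambda>r c.
      (\<Sum>l\<in>{1..ell}. mmul (kap div p) (Atil p m n lam kap X Kc f \<alpha> A ZA l s)
                                      (Btil p m n kap mu X Kc f \<alpha> B ZB l s) r c)
      + Mtil p m n X ell Kc f \<alpha> Z' Z'' s r c)"

definition Cmat :: "nat \<Rightarrow> nat \<Rightarrow> nat \<Rightarrow> nat \<Rightarrow> nat \<Rightarrow> nat \<Rightarrow> (nat \<Rightarrow> nat \<Rightarrow> 'a::comm_semiring_1 fmat)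
    \<Rightarrow> (nat \<Rightarrow> nat \<Rightarrow> 'a fmat) \<Rightarrow> nat \<Rightarrow> nat \<Rightarrow> nat \<Rightarrow> 'a fmat" where
  "Cmat p m n lam kap mu A B l k j = (\<lambda>r c.
     \<Sum>(a, b, e, d) \<in> {(a, b, e, d). a \<in> {1..m} \<and> b \<in> {1..p} \<and> e \<in> {1..p} \<and> d \<in> {1..n}
                          \<and> b - 1 + p * (a - 1) + p - e + p * m * (d - 1) + 1 = j}.
        mmul (kap div p) (blk (lam div m) (kap div p) (A l k) a b)
                         (blk (kap div p) (mu div n) (B l k) e d) r c)"

end

theory Submission
  imports Defs
begin


definition good :: "nat \<Rightarrow> (nat \<Rightarrow> 'a::field) \<Rightarrow> nat \<Rightarrow> (nat \<Rightarrow> 'a) \<Rightarrow> bool" where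
  "good S \<alpha> D h \<longleftrightarrow> (\<exists>q. degree q \<le> D \<and> (\<forall>s\<in>{1..S}. h s = poly q (\<alpha> s)))"

lemma good_mono: "good S \<alpha> D h \<Longrightarrow> D \<le> D' \<Longrightarrow> good S \<alpha> D' h"
  unfolding good_def by (meson order_trans)

lemma good_cong: "good S \<alpha> D h \<Longrightarrow> (\<And>s. s \<in> {1..S} \<Longrightarrow> h s = h' s) \<Longrightarrow> good S \<alpha> D h'"
  unfolding good_def by auto

lemma good_add: "good S \<alpha> D h \<Longrightarrow> good S \<alpha> D g \<Longrightarrow> good S \<alpha> D (\<lambda>s. h s + g s)"
  unfolding good_def
proof (elim exE conjE)
  fix q1 q2 assume "degree q1 \<le> D" "\<forall>s\<in>{1..S}. h s = poly q1 (\<alpha> s)"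
     "degree q2 \<le> D" "\<forall>s\<in>{1..S}. g s = poly q2 (\<alpha> s)"
  then show "\<exists>q. degree q \<le> D \<and> (\<forall>s\<in>{1..S}. h s + g s = poly q (\<alpha> s))"
    by (intro exI[of _ "q1 + q2"]) (auto intro: order_trans[OF degree_add_le_max])
qed

lemma good_diff: "good S \<alpha> D h \<Longrightarrow> good S \<alpha> D g \<Longrightarrow> good S \<alpha> D (\<lambda>s. h s - g s)"
  unfolding good_def
proof (elim exE conjE)
  fix q1 q2 assume "degree q1 \<le> D" "\<forall>s\<in>{1..S}. h s = poly q1 (\<alpha> s)"
     "degree q2 \<le> D" "\<forall>s\<in>{1..S}. g s = poly q2 (\<alpha> s)"
  then show "\<exists>q. degree q \<le> D \<and> (\<forall>s\<in>{1..S}. h s - g s = poly q (\<alpha> s))"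
    by (intro exI[of _ "q1 - q2"]) (auto intro: order_trans[OF degree_diff_le_max])
qed

lemma good_mult: "good S \<alpha> D1 h \<Longrightarrow> good S \<alpha> D2 g \<Longrightarrow> good S \<alpha> (D1 + D2) (\<lambda>s. h s * g s)"
  unfolding good_def
proof (elim exE conjE)
  fix q1 q2 assume "degree q1 \<le> D1" "\<forall>s\<in>{1..S}. h s = poly q1 (\<alpha> s)"
     "degree q2 \<le> D2" "\<forall>s\<in>{1..S}. g s = poly q2 (\<alpha> s)"
  then show "\<exists>q. degree q \<le> D1 + D2 \<and> (\<forall>s\<in>{1..S}. h s * g s = poly q (\<alpha> s))"
    by (intro exI[of _ "q1 * q2"]) (auto intro: order_trans[OF degree_mult_le])
qed

lemma good_const: "good S \<alpha> D (\<lambda>s. c)"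
  unfolding good_def by (intro exI[of _ "[:c:]"]) auto

lemma good_sum: "finite A \<Longrightarrow> (\<And>a. a \<in> A \<Longrightarrow> good S \<alpha> D (h a)) \<Longrightarrow> good S \<alpha> D (\<lambda>s. \<Sum>a\<in>A. h a s)"
proof (induction A rule: finite_induct)
  case empty then show ?case using good_const[of S \<alpha> D 0] by simp
next
  case (insert x F) then show ?case by (simp add: good_add)
qed

lemma good_prod: "finite A \<Longrightarrow> (\<And>a. a \<in> A \<Longrightarrow> good S \<alpha> D (h a)) \<Longrightarrow> good S \<alpha> (D * card A) (\<lambda>s. \<Prod>a\<in>A. h a s)"
proof (induction A rule: finite_induct)
  case empty then show ?case using good_const[of S \<alpha> 0 1] by simp
next
  case (insert x F) then show ?case using good_mult[of S \<alpha> D "h x" "D * card F"] by (simp add: add.commute)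
qed

lemma good_scale: "good S \<alpha> D h \<Longrightarrow> good S \<alpha> D (\<lambda>s. c * h s)"
  using good_mult[OF good_const[of S \<alpha> 0 c]] by simp

lemma good_lin_pow: "good S \<alpha> e (\<lambda>s. (c - \<alpha> s) ^ e)"
  unfolding good_def
  by (intro exI[of _ "[:c, -1:] ^ e"]) (auto intro: order_trans[OF degree_power_le] simp: poly_power)

lemma good_apow: "good S \<alpha> e (\<lambda>s. \<alpha> s ^ e)"
  unfolding good_def
  by (intro exI[of _ "monom 1 e"]) (auto simp: poly_monom degree_monom_le)

lemma good_poly_lin: "good S \<alpha> (degree W) (\<lambda>s. poly W (c - \<alpha> s))"
  unfolding good_def
  by (intro exI[of _ "pcompose W [:c, -1:]"]) (auto simp: poly_pcompose degree_pcompose)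



lemma sum_blocks: "(\<Sum>t<k*d. g (t::nat)) = (\<Sum>j<(k::nat). \<Sum>t<d. g (j*d+t)::'a::comm_monoid_add)"
proof (induction k)
  case 0 then show ?case by simp
next
  case (Suc k)
  have "{..<Suc k * d} = {..<k*d} \<union> {k*d..<k*d+d}" by auto
  then have "(\<Sum>t<Suc k*d. g t) = (\<Sum>t<k*d. g t) + (\<Sum>t\<in>{k*d..<k*d+d}. g t)"
    by (simp add: sum.union_disjoint ivl_disj_int)
  also have "(\<Sum>t\<in>{k*d..<k*d+d}. g t) = (\<Sum>t\<in>{0..<d}. g (t + k*d))"
    using sum.shift_bounds_nat_ivl[of g 0 "k*d" d] by (simp add: add.commute)
  also have "\<dots> = (\<Sum>t<d. g (k*d+t))" by (simp add: atLeast0LessThan add.commute)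
  finally show ?case using Suc by simp
qed

lemma idx_unique:
  fixes p m :: nat
  assumes "1\<le>b" "b\<le>p" "1\<le>e" "e\<le>p" "1\<le>a" "a\<le>m" "1\<le>a'" "a'\<le>m" "1\<le>d" "1\<le>d'"
    and eq: "b - 1 + p*(a-1) + p - e + p*m*(d-1) + 1 = p + p*(a'-1) + p*m*(d'-1)"
  shows "b = e \<and> a = a' \<and> d = d'"
proof -
  define K where "K = a - 1 + m*(d-1)"
  define K' where "K' = a' - 1 + m*(d'-1)"
  have pK: "p*K = p*(a-1) + p*m*(d-1)" "p*K' = p*(a'-1) + p*m*(d'-1)"
    unfolding K_def K'_def by (simp_all add: algebra_simps)
  have e1: "(b - 1 + (p - e)) + p*K = (p - 1) + p*K'"
    using eq assms unfolding pK by linarith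
  have "(b - 1 + (p - e)) mod p = (p - 1) mod p"
    using arg_cong[OF e1, of "\<lambda>x. x mod p"] by simp
  moreover have "(p-1) mod p = p - 1" using assms by simp
  ultimately have "(b - 1 + (p - e)) mod p = p - 1" by simp
  then have be: "b = e"
  proof (cases "b \<le> e")
    case True
    then have "b - 1 + (p - e) < p" using assms by linarith
    then show ?thesis using \<open>(b - 1 + (p - e)) mod p = p - 1\<close> True assms by simp
  next
    case False
    then have "b - 1 + (p - e) = p + (b - e - 1)" using assms by linarith
    moreover have "b - e - 1 < p" using assms by linarith
    ultimately have "(b - 1 + (p - e)) mod p = b - e - 1" by simp
    then show ?thesis using \<open>(b - 1 + (p - e)) mod p = p - 1\<close> False assms by linarith
  qed
  then have "p*K = p*K'" using e1 assms by linarith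
  then have KK: "K = K'" using assms by simp
  have mdm: "\<And>x y. x < m \<Longrightarrow> (x + m*y) mod m = x \<and> (x + m*y) div m = (y::nat)" by simp
  have "a - 1 < m" "a' - 1 < m" using assms by auto
  then have "(a - 1 + m*(d-1)) mod m = a - 1" "(a' - 1 + m*(d'-1)) mod m = a' - 1"
     "(a - 1 + m*(d-1)) div m = d - 1" "(a' - 1 + m*(d'-1)) div m = d' - 1" using mdm by blast+
  then have "a - 1 = a' - 1" "d - 1 = d' - 1" using KK unfolding K_def K'_def by metis+
  then show ?thesis using be assms by auto
qed



lemma PQ_expand:
  fixes f :: "nat \<Rightarrow> nat \<Rightarrow> 'a::field"
  assumes p: "0<p" and m: "0<m" and n: "0<n"
  shows "mmul (kap div p) (Pmat p m lam kap f \<alpha> A l k s) (Qmat p m n kap mu f \<alpha> B l k s) r c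
        = (\<Sum>i\<le>Rp p m n + p - 2. Cmat p m n lam kap mu A B l k (i + 1) r c * (f l k - \<alpha> s) ^ i)"
proof -
  define x where "x = f l k - \<alpha> s"
  define dd where "dd = kap div p"
  define bA where "bA = blk (lam div m) (kap div p) (A l k)"
  define bB where "bB = blk (kap div p) (mu div n) (B l k)"
  define Q where "Q = {1..m} \<times> {1..p} \<times> {1..p} \<times> {1..n}"
  define E where "E = (\<lambda>(a::nat,b::nat,e::nat,d::nat). b - 1 + p * (a - 1) + p - e + p * m * (d - 1))"
  define g where "g = (\<lambda>(a,b,e,d). mmul dd (bA a b) (bB e d) r c)"
  define N where "N = Rp p m n + p - 2"
  have finQ: "finite Q" unfolding Q_def by simp
  have stepA: "mmul dd (Pmat p m lam kap f \<alpha> A l k s) (Qmat p m n kap mu f \<alpha> B l k s) r c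
      = (\<Sum>q\<in>Q. g q * x ^ E q)"
  proof -
    have "\<And>t. Pmat p m lam kap f \<alpha> A l k s r t * Qmat p m n kap mu f \<alpha> B l k s t c
        = (\<Sum>q\<in>Q. (case q of (a,b,e,d) \<Rightarrow> bA a b r t * bB e d t c * x ^ E (a,b,e,d)))"
    proof -
      fix t
      have "Pmat p m lam kap f \<alpha> A l k s r t * Qmat p m n kap mu f \<alpha> B l k s t c
        = (\<Sum>a\<in>{1..m}. \<Sum>b\<in>{1..p}. \<Sum>e\<in>{1..p}. \<Sum>d\<in>{1..n}.
             (bA a b r t * x ^ (b - 1 + p * (a - 1))) * (bB e d t c * x ^ (p - e + p * m * (d - 1))))"
        unfolding Pmat_def Qmat_def bA_def bB_def x_def by (simp only: sum_distrib_right) (simp only: sum_distrib_left)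
      also have "\<dots> = (\<Sum>a\<in>{1..m}. \<Sum>b\<in>{1..p}. \<Sum>e\<in>{1..p}. \<Sum>d\<in>{1..n}.
             bA a b r t * bB e d t c * x ^ E (a,b,e,d))"
      proof (intro sum.cong refl)
        fix a b e d assume "e \<in> {1..p}"
        then have "E (a,b,e,d) = (b - 1 + p * (a - 1)) + (p - e + p * m * (d - 1))"
          unfolding E_def by auto
        then show "(bA a b r t * x ^ (b - 1 + p * (a - 1))) * (bB e d t c * x ^ (p - e + p * m * (d - 1)))
           = bA a b r t * bB e d t c * x ^ E (a,b,e,d)" by (simp add: power_add mult_ac)
      qed
      also have "\<dots> = (\<Sum>q\<in>Q. (case q of (a,b,e,d) \<Rightarrow> bA a b r t * bB e d t c * x ^ E (a,b,e,d)))"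
        unfolding Q_def by (simp add: sum.cartesian_product)
      finally show "?thesis t" .
    qed
    then have "mmul dd (Pmat p m lam kap f \<alpha> A l k s) (Qmat p m n kap mu f \<alpha> B l k s) r c
        = (\<Sum>t<dd. \<Sum>q\<in>Q. (case q of (a,b,e,d) \<Rightarrow> bA a b r t * bB e d t c * x ^ E (a,b,e,d)))"
      unfolding mmul_def by simp
    also have "\<dots> = (\<Sum>q\<in>Q. \<Sum>t<dd. (case q of (a,b,e,d) \<Rightarrow> bA a b r t * bB e d t c * x ^ E (a,b,e,d)))"
      by (rule sum.swap)
    also have "\<dots> = (\<Sum>q\<in>Q. g q * x ^ E q)"
      by (rule sum.cong) (auto simp: g_def mmul_def sum_distrib_right)
    finally show ?thesis .
  qed
  have Ebound: "E ` Q \<subseteq> {..N}"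
  proof
    fix y assume "y \<in> E ` Q"
    then obtain a b e d where q: "a\<in>{1..m}" "b\<in>{1..p}" "e\<in>{1..p}" "d\<in>{1..n}" "y = E (a,b,e,d)"
      unfolding Q_def by auto
    have "p*(a-1) \<le> p*(m-1)" "p*m*(d-1) \<le> p*m*(n-1)" using q by auto
    moreover have "p*(m-1) = p*m - p" "p*m*(n-1) = p*m*n - p*m" by (simp_all add: algebra_simps)
    moreover have "p \<le> p*m" "p*m \<le> p*m*n" using m n by auto
    moreover have "y = b - 1 + p * (a - 1) + p - e + p * m * (d - 1)" using q by (simp add: E_def)
    moreover have "b \<le> p" "1 \<le> e" "1 \<le> b" using q by auto
    ultimately have "y \<le> p*m*n + p - 2" by linarith
    then show "y \<in> {..N}" unfolding N_def Rp_def by simp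
  qed
  have "(\<Sum>q\<in>Q. g q * x ^ E q) = (\<Sum>i\<in>{..N}. \<Sum>q\<in>{q. q \<in> Q \<and> E q = i}. g q * x ^ E q)"
    using sum.group[OF finQ _ Ebound, of "\<lambda>q. g q * x ^ E q"] by simp
  also have "\<dots> = (\<Sum>i\<in>{..N}. (\<Sum>q\<in>{q. q \<in> Q \<and> E q = i}. g q) * x ^ i)"
    by (rule sum.cong) (auto simp: sum_distrib_right)
  also have "\<dots> = (\<Sum>i\<le>N. Cmat p m n lam kap mu A B l k (i + 1) r c * x ^ i)"
  proof (rule sum.cong)
    fix i assume "i \<in> {..N}"
    have "{q. q \<in> Q \<and> E q = i} = {(a, b, e, d). a \<in> {1..m} \<and> b \<in> {1..p} \<and> e \<in> {1..p} \<and> d \<in> {1..n}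
                          \<and> b - 1 + p * (a - 1) + p - e + p * m * (d - 1) + 1 = i + 1}"
      unfolding Q_def E_def by auto
    then show "(\<Sum>q\<in>{q. q \<in> Q \<and> E q = i}. g q) * x ^ i = Cmat p m n lam kap mu A B l k (i + 1) r c * x ^ i"
      unfolding Cmat_def g_def bA_def bB_def dd_def by simp
  qed simp
  finally show ?thesis using stepA unfolding N_def x_def dd_def by simp
qed



lemma sum_1n: "(\<Sum>x\<in>{1..n}. g x) = (\<Sum>j<(n::nat). g (Suc j))"
proof -
  have "{1..n} = Suc ` {..<n}" by (auto simp: image_iff) (metis Suc_pred lessThan_iff Suc_le_eq less_Suc_eq_le)
  then show ?thesis by (simp add: sum.reindex)
qed

lemma Cmat_diag:
  assumes p: "0<p" and m: "0<m" and n: "0<n" and mm: "m' \<in> {1..m}" and nn: "n'' \<in> {1..n}"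
  shows "Cmat p m n lam kap mu A B l k (p + p*(m'-1) + p*m*(n''-1)) r c
     = (\<Sum>p'\<in>{1..p}. mmul (kap div p) (blk (lam div m) (kap div p) (A l k) m' p')
                                      (blk (kap div p) (mu div n) (B l k) p' n'') r c)"
proof -
  let ?S = "{(a, b, e, d). a \<in> {1..m} \<and> b \<in> {1..p} \<and> e \<in> {1..p} \<and> d \<in> {1..n}
                          \<and> b - 1 + p * (a - 1) + p - e + p * m * (d - 1) + 1 = p + p*(m'-1) + p*m*(n''-1)}"
  have S: "?S = (\<lambda>p'. (m',p',p',n'')) ` {1..p}"
  proof
    show "?S \<subseteq> (\<lambda>p'. (m',p',p',n'')) ` {1..p}"
    proof
      fix q assume "q \<in> ?S"
      then obtain a b e d where q: "q = (a,b,e,d)" "a \<in> {1..m}" "b \<in> {1..p}" "e \<in> {1..p}" "d \<in> {1..n}"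
        "b - 1 + p * (a - 1) + p - e + p * m * (d - 1) + 1 = p + p*(m'-1) + p*m*(n''-1)" by blast
      then have "b = e \<and> a = m' \<and> d = n''" using idx_unique[of b p e a m m' d n''] mm nn by auto
      then show "q \<in> (\<lambda>p'. (m',p',p',n'')) ` {1..p}" using q by auto
    qed
  next
    show "(\<lambda>p'. (m',p',p',n'')) ` {1..p} \<subseteq> ?S"
    proof
      fix q assume "q \<in> (\<lambda>p'. (m',p',p',n'')) ` {1..p}"
      then obtain b where q: "q = (m',b,b,n'')" "b \<in> {1..p}" by auto
      then have "b - 1 + p * (m' - 1) + p - b + p * m * (n'' - 1) + 1 = p + p*(m'-1) + p*m*(n''-1)"
        by auto
      then show "q \<in> ?S" using q mm nn by auto
    qed
  qed
  show ?thesis unfolding Cmat_def S by (simp add: sum.reindex inj_on_def)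
qed

lemma blk_mmul:
  assumes p: "0<p" and dv: "p dvd kap" and mm: "m' \<in> {1..m}" and nn: "n'' \<in> {1..n}"
  shows "(\<Sum>p'\<in>{1..p}. mmul (kap div p) (blk rs (kap div p) M m' p') (blk (kap div p) cs N p' n'') r c)
     = blk rs cs (mmul kap M N) m' n'' r c"
proof -
  define dd where "dd = kap div p"
  have kap: "kap = p * dd" using dv unfolding dd_def by simp
  have "blk rs cs (mmul kap M N) m' n'' r c = (\<Sum>t<p*dd. M ((m'-1)*rs + r) t * N t ((n''-1)*cs + c))"
    unfolding blk_def mmul_def kap by simp
  also have "\<dots> = (\<Sum>j<p. \<Sum>t<dd. M ((m'-1)*rs + r) (j*dd+t) * N (j*dd+t) ((n''-1)*cs + c))"
    by (rule sum_blocks)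
  also have "\<dots> = (\<Sum>p'\<in>{1..p}. mmul dd (blk rs dd M m' p') (blk dd cs N p' n'') r c)"
    unfolding sum_1n blk_def mmul_def by (simp add: add.commute)
  finally show ?thesis unfolding dd_def by simp
qed



lemma prod_expand:
  fixes x :: "'k \<Rightarrow> 'a::field"
  assumes fin: "finite K" and nz: "\<And>k. k \<in> K \<Longrightarrow> x k \<noteq> 0"
  shows "(\<Prod>k\<in>K. x k ^ R) * ((\<Sum>k\<in>K. P k / x k ^ R) + a) * ((\<Sum>k\<in>K. Q k / x k ^ R) + b) =
     (\<Sum>k\<in>K. (\<Prod>j\<in>K-{k}. x j ^ R) * (P k * Q k) / x k ^ R)
   + (\<Sum>k\<in>K. \<Sum>k'\<in>K-{k}. (\<Prod>j\<in>K-{k}-{k'}. x j ^ R) * (P k * Q k'))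
   + (\<Sum>k\<in>K. (\<Prod>j\<in>K-{k}. x j ^ R) * P k * b)
   + (\<Sum>k\<in>K. (\<Prod>j\<in>K-{k}. x j ^ R) * Q k * a)
   + (\<Prod>k\<in>K. x k ^ R) * a * b"
proof -
  define D where "D = (\<Prod>k\<in>K. x k ^ R)"
  have F1: "D = x k ^ R * (\<Prod>j\<in>K-{k}. x j ^ R)" if "k \<in> K" for k
    unfolding D_def using prod.remove[OF fin that] .
  have F2: "D = x k ^ R * x k' ^ R * (\<Prod>j\<in>K-{k}-{k'}. x j ^ R)" if "k \<in> K" "k' \<in> K - {k}" for k k'
  proof -
    have "(\<Prod>j\<in>K-{k}. x j ^ R) = x k' ^ R * (\<Prod>j\<in>K-{k}-{k'}. x j ^ R)"
      using prod.remove[of "K-{k}" k'] fin that by simp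
    then show ?thesis using F1[OF that(1)] by (simp add: mult.assoc)
  qed
  have L1: "D * (\<Sum>k\<in>K. P k / x k ^ R) = (\<Sum>k\<in>K. (\<Prod>j\<in>K-{k}. x j ^ R) * P k)"
    unfolding sum_distrib_left
  proof (rule sum.cong[OF refl])
    fix k assume k: "k \<in> K"
    show "D * (P k / x k ^ R) = (\<Prod>j\<in>K-{k}. x j ^ R) * P k"
      using F1[OF k] nz[OF k] by (simp add: field_simps)
  qed
  have L2: "D * (\<Sum>k\<in>K. Q k / x k ^ R) = (\<Sum>k\<in>K. (\<Prod>j\<in>K-{k}. x j ^ R) * Q k)"
    unfolding sum_distrib_left
  proof (rule sum.cong[OF refl])
    fix k assume k: "k \<in> K"
    show "D * (Q k / x k ^ R) = (\<Prod>j\<in>K-{k}. x j ^ R) * Q k"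
      using F1[OF k] nz[OF k] by (simp add: field_simps)
  qed
  have L3: "D * (\<Sum>k\<in>K. P k / x k ^ R) * (\<Sum>k\<in>K. Q k / x k ^ R) =
     (\<Sum>k\<in>K. (\<Prod>j\<in>K-{k}. x j ^ R) * (P k * Q k) / x k ^ R)
   + (\<Sum>k\<in>K. \<Sum>k'\<in>K-{k}. (\<Prod>j\<in>K-{k}-{k'}. x j ^ R) * (P k * Q k'))"
  proof -
    have "D * (\<Sum>k\<in>K. P k / x k ^ R) * (\<Sum>k\<in>K. Q k / x k ^ R)
        = (\<Sum>k\<in>K. \<Sum>k'\<in>K. D * (P k / x k ^ R) * (Q k' / x k' ^ R))"
      unfolding mult.assoc sum_product by (simp add: sum_distrib_left mult.assoc)
    also have "\<dots> = (\<Sum>k\<in>K. (\<Prod>j\<in>K-{k}. x j ^ R) * (P k * Q k) / x k ^ R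
                    + (\<Sum>k'\<in>K-{k}. (\<Prod>j\<in>K-{k}-{k'}. x j ^ R) * (P k * Q k')))"
    proof (rule sum.cong[OF refl])
      fix k assume k: "k \<in> K"
      have "(\<Sum>k'\<in>K. D * (P k / x k ^ R) * (Q k' / x k' ^ R))
          = D * (P k / x k ^ R) * (Q k / x k ^ R) + (\<Sum>k'\<in>K-{k}. D * (P k / x k ^ R) * (Q k' / x k' ^ R))"
        using sum.remove[OF fin k] by blast
      also have "D * (P k / x k ^ R) * (Q k / x k ^ R) = (\<Prod>j\<in>K-{k}. x j ^ R) * (P k * Q k) / x k ^ R"
        using F1[OF k] nz[OF k] by (simp add: field_simps power2_eq_square)
      also have "(\<Sum>k'\<in>K-{k}. D * (P k / x k ^ R) * (Q k' / x k' ^ R))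
          = (\<Sum>k'\<in>K-{k}. (\<Prod>j\<in>K-{k}-{k'}. x j ^ R) * (P k * Q k'))"
      proof (rule sum.cong[OF refl])
        fix k' assume k': "k' \<in> K - {k}"
        show "D * (P k / x k ^ R) * (Q k' / x k' ^ R) = (\<Prod>j\<in>K-{k}-{k'}. x j ^ R) * (P k * Q k')"
          using F2[OF k k'] nz[OF k] nz[of k'] k' by (simp add: field_simps)
      qed
      finally show "(\<Sum>k'\<in>K. D * (P k / x k ^ R) * (Q k' / x k' ^ R)) =
          (\<Prod>j\<in>K-{k}. x j ^ R) * (P k * Q k) / x k ^ R
                    + (\<Sum>k'\<in>K-{k}. (\<Prod>j\<in>K-{k}-{k'}. x j ^ R) * (P k * Q k'))" .
    qed
    finally show ?thesis by (simp add: sum.distrib)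
  qed
  have eq: "D * ((\<Sum>k\<in>K. P k / x k ^ R) + a) * ((\<Sum>k\<in>K. Q k / x k ^ R) + b)
      = D * (\<Sum>k\<in>K. P k / x k ^ R) * (\<Sum>k\<in>K. Q k / x k ^ R)
        + (D * (\<Sum>k\<in>K. P k / x k ^ R)) * b + (D * (\<Sum>k\<in>K. Q k / x k ^ R)) * a + D * a * b"
    by (simp add: algebra_simps)
  show ?thesis unfolding D_def[symmetric] eq L3 unfolding L1 L2 by (simp add: sum_distrib_right)
qed

lemma poly_split_shift:
  fixes y :: "'a::field"
  assumes "y \<noteq> 0"
  shows "poly U y / y ^ R = (\<Sum>i<R. coeff U i / y ^ (R - i)) + poly (poly_shift R U) y"
proof -
  have U: "U = (\<Sum>i<R. monom (coeff U i) i) + monom 1 R * poly_shift R U"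
    by (rule poly_eqI) (auto simp: coeff_sum coeff_monom coeff_monom_mult coeff_poly_shift)
  have "poly U y = (\<Sum>i<R. coeff U i * y ^ i) + y ^ R * poly (poly_shift R U) y"
    by (subst U) (simp add: poly_sum poly_monom)
  then have "poly U y / y ^ R = (\<Sum>i<R. coeff U i * y ^ i / y ^ R) + poly (poly_shift R U) y"
    using assms by (simp add: add_divide_distrib sum_divide_distrib)
  also have "(\<Sum>i<R. coeff U i * y ^ i / y ^ R) = (\<Sum>i<R. coeff U i / y ^ (R - i))"
  proof (rule sum.cong[OF refl])
    fix i assume "i \<in> {..<R}"
    then have "y ^ R = y ^ i * y ^ (R - i)" by (simp add: power_add[symmetric])
    then show "coeff U i * y ^ i / y ^ R = coeff U i / y ^ (R - i)" using assms by simp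
  qed
  finally show ?thesis .
qed

lemma degree_poly_shift: "degree (poly_shift R U) \<le> degree U - R"
  by (rule degree_le) (auto simp: coeff_poly_shift coeff_eq_0)

lemma Psi_eval: "poly (Psi Kc R f l k) (f l k - a) = (\<Prod>j\<in>{1..Kc}-{k}. (f l j - a) ^ R)"
  unfolding Psi_def by (simp add: poly_prod poly_power)

lemma degree_Psi: assumes "k \<in> {1..Kc}" shows "degree (Psi Kc R f l k) \<le> R * (Kc - 1)"
proof -
  have "degree (Psi Kc R f l k) \<le> (\<Sum>j\<in>{1..Kc}-{k}. degree ([:f l j - f l k, 1:] ^ R))"
    unfolding Psi_def using degree_prod_sum_le[of "{1..Kc}-{k}"] by (simp add: o_def)
  also have "\<dots> \<le> (\<Sum>j\<in>{1..Kc}-{k}. R)" by (rule sum_mono) (simp add: degree_power_eq)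
  also have "\<dots> \<le> R * (Kc - 1)"
    using assms by (simp add: card_Diff_singleton)
  finally show ?thesis .
qed



lemma good_P: "good S \<alpha> (p*m - 1) (\<lambda>s. Pmat p m lam kap f \<alpha> A l k s r t)"
  unfolding Pmat_def
proof (intro good_sum finite_atLeastAtMost)
  fix m' p' assume mp: "m' \<in> {1..m}" "p' \<in> {1..p}"
  have "p*(m'-1) \<le> p*(m-1)" using mp by auto
  moreover have "p*(m-1) = p*m - p" by (simp add: algebra_simps)
  moreover have "p \<le> p*m" "1 \<le> p'" "p' \<le> p" "1 \<le> m'" using mp by auto
  ultimately have "p' - 1 + p*(m'-1) \<le> p*m - 1" using mp by linarith
  then show "good S \<alpha> (p * m - 1) (\<lambda>s. blk (lam div m) (kap div p) (A l k) m' p' r t * (f l k - \<alpha> s) ^ (p' - 1 + p * (m' - 1)))"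
    by (intro good_scale good_mono[OF good_lin_pow])
qed

lemma good_Q: "0 < m \<Longrightarrow> good S \<alpha> (p*m*n - p*m + p - 1) (\<lambda>s. Qmat p m n kap mu f \<alpha> B l k s t c)"
  unfolding Qmat_def
proof (intro good_sum finite_atLeastAtMost)
  fix p'' n'' assume mp: "p'' \<in> {1..p}" "n'' \<in> {1..n}" and m: "0 < m"
  have "p*m*(n''-1) \<le> p*m*(n-1)" using mp by auto
  moreover have "p*m*(n-1) = p*m*n - p*m" by (simp add: algebra_simps)
  moreover have "1 \<le> p''" "p'' \<le> p" using mp by auto
  ultimately have "p - p'' + p*m*(n''-1) \<le> p*m*n - p*m + p - 1" using mp by linarith
  then show "good S \<alpha> (p*m*n - p*m + p - 1) (\<lambda>s. blk (kap div p) (mu div n) (B l k) p'' n'' t c * (f l k - \<alpha> s) ^ (p - p'' + p * m * (n'' - 1)))"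
    by (intro good_scale good_mono[OF good_lin_pow])
qed

lemma good_noise: "good S \<alpha> (X - 1) (\<lambda>s. \<Sum>x\<in>{1..X}. \<alpha> s ^ (x - 1) * Z x)"
proof (intro good_sum finite_atLeastAtMost)
  fix x assume "x \<in> {1..X}"
  then show "good S \<alpha> (X - 1) (\<lambda>s. \<alpha> s ^ (x - 1) * Z x)"
    using good_mult[OF good_apow[of S \<alpha> "x-1"] good_const[of S \<alpha> 0 "Z x"]]
    by (auto intro: good_mono)
qed

lemma good_prodx: "finite J \<Longrightarrow> good S \<alpha> (R * card J) (\<lambda>s. \<Prod>j\<in>J. (f l j - \<alpha> s) ^ R)"
  by (rule good_prod) (auto intro: good_lin_pow)

lemma G1:
  assumes "0 < X"
  shows "good S \<alpha> (Rp p m n * Kc + 2*X - 2) (\<lambda>s. \<Sum>l\<in>{1..ell}. \<Sum>t<kap div p.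
     Delta Kc (Rp p m n) f l (\<alpha> s) * (\<Sum>x\<in>{1..X}. \<alpha> s^(x-1) * ZA l x r t) * (\<Sum>x\<in>{1..X}. \<alpha> s^(x-1) * ZB l x t c))"
proof (intro good_sum finite_atLeastAtMost finite_lessThan)
  fix l t
  have "good S \<alpha> (Rp p m n * Kc + (X - 1) + (X - 1)) (\<lambda>s.
     Delta Kc (Rp p m n) f l (\<alpha> s) * (\<Sum>x\<in>{1..X}. \<alpha> s^(x-1) * ZA l x r t) * (\<Sum>x\<in>{1..X}. \<alpha> s^(x-1) * ZB l x t c))"
    unfolding Delta_def
    by (intro good_mult good_noise) (use good_prodx[of "{1..Kc}" S \<alpha> "Rp p m n" f l] in simp)
  then show "good S \<alpha> (Rp p m n * Kc + 2*X - 2) (\<lambda>s.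
     Delta Kc (Rp p m n) f l (\<alpha> s) * (\<Sum>x\<in>{1..X}. \<alpha> s^(x-1) * ZA l x r t) * (\<Sum>x\<in>{1..X}. \<alpha> s^(x-1) * ZB l x t c))"
    by (rule good_mono) (use assms in linarith)
qed



lemma G2_l:
  fixes f :: "nat \<Rightarrow> nat \<Rightarrow> 'a::field"
  assumes pos: "0<p" "0<m" "0<n" "0<X" "0<Kc"
    and nz: "\<And>k s. k \<in> {1..Kc} \<Longrightarrow> s \<in> {1..S} \<Longrightarrow> f l k \<noteq> \<alpha> s"
  shows "good S \<alpha> (Rp p m n*(Kc-1)+X+DE p m n - 1)
   (\<lambda>s. mmul (kap div p) (Atil p m n lam kap X Kc f \<alpha> A ZA l s) (Btil p m n kap mu X Kc f \<alpha> B ZB l s) r c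
      - (\<Sum>k\<in>{1..Kc}. \<Sum>i<Rp p m n. (\<Sum>i'\<le>i. cc Kc (Rp p m n) f l k (i-i') * Cmat p m n lam kap mu A B l k (i'+1) r c)
            / (f l k - \<alpha> s)^(Rp p m n - i))
      - (\<Sum>t<kap div p. Delta Kc (Rp p m n) f l (\<alpha> s) * (\<Sum>x\<in>{1..X}. \<alpha> s^(x-1) * ZA l x r t)
            * (\<Sum>x\<in>{1..X}. \<alpha> s^(x-1) * ZB l x t c)))"
    (is "good S \<alpha> ?T1 ?h")
proof -
  define R where "R = Rp p m n"
  define K where "K = {1..Kc}"
  define dd where "dd = kap div p"
  define P where "P = (\<lambda>k s t. Pmat p m lam kap f \<alpha> A l k s r t)"
  define Q where "Q = (\<lambda>k s t. Qmat p m n kap mu f \<alpha> B l k s t c)"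
  define a where "a = (\<lambda>s t. \<Sum>x\<in>{1..X}. \<alpha> s^(x-1) * ZA l x r t)"
  define b where "b = (\<lambda>s t. \<Sum>x\<in>{1..X}. \<alpha> s^(x-1) * ZB l x t c)"
  define xx where "xx = (\<lambda>k s. f l k - \<alpha> s)"
  define Cp where "Cp = (\<lambda>k. \<Sum>i\<le>R + p - 2. monom (Cmat p m n lam kap mu A B l k (i + 1) r c) i)"
  define U where "U = (\<lambda>k. Cp k * Psi Kc R f l k)"
  define g where "g = (\<lambda>s. (\<Sum>k\<in>K. poly (poly_shift R (U k)) (xx k s))
     + (\<Sum>t<dd. (\<Sum>k\<in>K. \<Sum>k'\<in>K-{k}. (\<Prod>j\<in>K-{k}-{k'}. xx j s ^ R) * (P k s t * Q k' s t))
        + (\<Sum>k\<in>K. (\<Prod>j\<in>K-{k}. xx j s ^ R) * P k s t * b s t)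
        + (\<Sum>k\<in>K. (\<Prod>j\<in>K-{k}. xx j s ^ R) * Q k s t * a s t)))"
  define A1 where "A1 = p * m"
  define W where "W = R * (Kc - 1)"
  have A1p: "p \<le> A1" "A1 \<le> R" unfolding A1_def R_def Rp_def using pos by auto
  have DE: "A1 - 1 \<le> DE p m n" "R - A1 + p - 1 \<le> DE p m n"
    unfolding DE_def A1_def R_def Rp_def by auto
  have T1: "?T1 = W + X + DE p m n - 1" unfolding W_def R_def by simp
  have finK: "finite K" unfolding K_def by simp
  have gP: "good S \<alpha> (A1 - 1) (\<lambda>s. P k s t)" for k t unfolding P_def A1_def by (rule good_P)
  have gQ: "good S \<alpha> (R - A1 + p - 1) (\<lambda>s. Q k s t)" for k t
    unfolding Q_def A1_def R_def Rp_def using good_Q pos by blast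
  have ga: "good S \<alpha> (X - 1) (\<lambda>s. a s t)" for t unfolding a_def by (rule good_noise)
  have gb: "good S \<alpha> (X - 1) (\<lambda>s. b s t)" for t unfolding b_def by (rule good_noise)
  have gPi1: "good S \<alpha> W (\<lambda>s. \<Prod>j\<in>K-{k}. xx j s ^ R)" if "k \<in> K" for k
    using good_prodx[of "K-{k}" S \<alpha> R f l] that finK unfolding W_def xx_def K_def
    by (simp add: card_Diff_singleton)
  have good_g: "good S \<alpha> (W + X + DE p m n - 1) g"
    unfolding g_def
  proof (intro good_add good_sum finK finite_lessThan finite_Diff)
    fix k assume k: "k \<in> K"
    have dU: "degree (U k) \<le> (R + p - 2) + W"
    proof -
      have "degree (Cp k) \<le> R + p - 2"
        unfolding Cp_def by (rule degree_le) (auto simp: coeff_sum coeff_monom)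
      moreover have "degree (Psi Kc R f l k) \<le> W" unfolding W_def using degree_Psi k K_def by blast
      ultimately show ?thesis unfolding U_def using degree_mult_le order_trans add_mono by blast
    qed
    have "degree (poly_shift R (U k)) \<le> W + X + DE p m n - 1"
      using degree_poly_shift[of R "U k"] dU DE A1p pos by linarith
    then show "good S \<alpha> (W + X + DE p m n - 1) (\<lambda>s. poly (poly_shift R (U k)) (xx k s))"
      unfolding xx_def using good_poly_lin good_mono by blast
  next
    fix t k assume k: "k \<in> K"
    show "good S \<alpha> (W + X + DE p m n - 1) (\<lambda>s. (\<Prod>j\<in>K-{k}. xx j s ^ R) * P k s t * b s t)"
      by (rule good_mono[OF good_mult[OF good_mult[OF gPi1[OF k] gP] gb]]) (use DE pos in linarith)
  next
    fix t k assume k: "k \<in> K"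
    show "good S \<alpha> (W + X + DE p m n - 1) (\<lambda>s. (\<Prod>j\<in>K-{k}. xx j s ^ R) * Q k s t * a s t)"
      by (rule good_mono[OF good_mult[OF good_mult[OF gPi1[OF k] gQ] ga]]) (use DE pos in linarith)
  next
    fix t k k' assume k: "k \<in> K" and k': "k' \<in> K - {k}"
    have cK: "card (K - {k} - {k'}) = Kc - 2" "2 \<le> Kc"
      using k k' unfolding K_def by (auto simp: card_Diff_singleton)
    have Wk: "R * (Kc - 2) + R = W" unfolding W_def using cK(2)
      by (metis Suc_diff_Suc Suc_1 add.commute le_add_diff_inverse2 less_le_trans mult_Suc_right one_less_numeral_iff semiring_norm(76))
    have "good S \<alpha> (R * card (K - {k} - {k'})) (\<lambda>s. \<Prod>j\<in>K-{k}-{k'}. xx j s ^ R)"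
      using good_prodx[of "K-{k}-{k'}" S \<alpha> R f l] finK unfolding xx_def by simp
    then have "good S \<alpha> (R * (Kc - 2) + (A1 - 1 + (R - A1 + p - 1))) (\<lambda>s. (\<Prod>j\<in>K-{k}-{k'}. xx j s ^ R) * (P k s t * Q k' s t))"
      unfolding cK by (intro good_mult gP gQ)
    then show "good S \<alpha> (W + X + DE p m n - 1) (\<lambda>s. (\<Prod>j\<in>K-{k}-{k'}. xx j s ^ R) * (P k s t * Q k' s t))"
      by (rule good_mono) (use DE pos A1p Wk in linarith)
  qed
  have eqs: "?h s = g s" if s: "s \<in> {1..S}" for s
  proof -
    have nzs: "\<And>k. k \<in> K \<Longrightarrow> xx k s \<noteq> 0" using nz s unfolding K_def xx_def by auto
    define D1 where "D1 = (\<lambda>t. \<Sum>k\<in>K. (\<Prod>j\<in>K-{k}. xx j s ^ R) * (P k s t * Q k s t) / xx k s ^ R)"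
    define D234 where "D234 = (\<lambda>t. (\<Sum>k\<in>K. \<Sum>k'\<in>K-{k}. (\<Prod>j\<in>K-{k}-{k'}. xx j s ^ R) * (P k s t * Q k' s t))
        + (\<Sum>k\<in>K. (\<Prod>j\<in>K-{k}. xx j s ^ R) * P k s t * b s t)
        + (\<Sum>k\<in>K. (\<Prod>j\<in>K-{k}. xx j s ^ R) * Q k s t * a s t))"
    define NN where "NN = (\<lambda>t. Delta Kc (Rp p m n) f l (\<alpha> s) * a s t * b s t)"
    have Dl: "Delta Kc (Rp p m n) f l (\<alpha> s) = (\<Prod>k\<in>K. xx k s ^ R)"
      unfolding Delta_def K_def xx_def R_def ..
    have AB: "Atil p m n lam kap X Kc f \<alpha> A ZA l s r t * Btil p m n kap mu X Kc f \<alpha> B ZB l s t c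
        = D1 t + D234 t + NN t" for t
    proof -
      have "Atil p m n lam kap X Kc f \<alpha> A ZA l s r t * Btil p m n kap mu X Kc f \<alpha> B ZB l s t c
         = (\<Prod>k\<in>K. xx k s ^ R) * ((\<Sum>k\<in>K. P k s t / xx k s ^ R) + a s t) * ((\<Sum>k\<in>K. Q k s t / xx k s ^ R) + b s t)"
        unfolding Atil_def Btil_def Dl[symmetric] unfolding P_def Q_def a_def b_def xx_def K_def R_def by simp
      also have "\<dots> = D1 t + D234 t + NN t"
        using prod_expand[OF finK nzs, where R=R and P="\<lambda>k. P k s t" and a="a s t" and Q="\<lambda>k. Q k s t" and b="b s t"]
        unfolding D1_def D234_def NN_def Dl by simp
      finally show ?thesis .
    qed
    have mm: "mmul dd (Atil p m n lam kap X Kc f \<alpha> A ZA l s) (Btil p m n kap mu X Kc f \<alpha> B ZB l s) r c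
        = (\<Sum>t<dd. D1 t) + (\<Sum>t<dd. D234 t) + (\<Sum>t<dd. NN t)"
      unfolding mmul_def AB by (simp add: sum.distrib)
    have sD1: "(\<Sum>t<dd. D1 t) = (\<Sum>k\<in>K. poly (U k) (xx k s) / xx k s ^ R)"
    proof -
      have "(\<Sum>t<dd. D1 t) = (\<Sum>k\<in>K. (\<Prod>j\<in>K-{k}. xx j s ^ R) * (\<Sum>t<dd. P k s t * Q k s t) / xx k s ^ R)"
        unfolding D1_def by (subst sum.swap) (simp add: sum_distrib_left sum_divide_distrib)
      also have "\<dots> = (\<Sum>k\<in>K. poly (U k) (xx k s) / xx k s ^ R)"
      proof (rule sum.cong[OF refl])
        fix k assume k: "k \<in> K"
        have "(\<Sum>t<dd. P k s t * Q k s t) = poly (Cp k) (xx k s)"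
          unfolding P_def Q_def dd_def Cp_def
          using PQ_expand[OF pos(1-3), of kap lam f \<alpha> A l k s mu B r c]
          by (simp add: mmul_def poly_sum poly_monom xx_def R_def)
        moreover have "(\<Prod>j\<in>K-{k}. xx j s ^ R) = poly (Psi Kc R f l k) (xx k s)"
          unfolding xx_def K_def Psi_eval ..
        ultimately show "(\<Prod>j\<in>K-{k}. xx j s ^ R) * (\<Sum>t<dd. P k s t * Q k s t) / xx k s ^ R
            = poly (U k) (xx k s) / xx k s ^ R"
          unfolding U_def by (simp add: mult.commute)
      qed
      finally show ?thesis .
    qed
    have cU: "coeff (U k) i = (\<Sum>i'\<le>i. cc Kc (Rp p m n) f l k (i-i') * Cmat p m n lam kap mu A B l k (i'+1) r c)"
      if "i < R" for k i
    proof -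
      have "coeff (U k) i = (\<Sum>i'\<le>i. coeff (Cp k) i' * coeff (Psi Kc R f l k) (i - i'))"
        unfolding U_def coeff_mult ..
      also have "\<dots> = (\<Sum>i'\<le>i. cc Kc (Rp p m n) f l k (i-i') * Cmat p m n lam kap mu A B l k (i'+1) r c)"
      proof (rule sum.cong[OF refl])
        fix i' assume "i' \<in> {..i}"
        then have "i' \<le> R + p - 2" using that pos by auto
        then have "coeff (Cp k) i' = Cmat p m n lam kap mu A B l k (i'+1) r c"
          unfolding Cp_def by (simp add: coeff_sum coeff_monom)
        then show "coeff (Cp k) i' * coeff (Psi Kc R f l k) (i - i') = cc Kc (Rp p m n) f l k (i-i') * Cmat p m n lam kap mu A B l k (i'+1) r c"
          unfolding cc_def R_def by simp
      qed
      finally show ?thesis .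
    qed
    have sD1': "(\<Sum>t<dd. D1 t) = (\<Sum>k\<in>{1..Kc}. \<Sum>i<Rp p m n. (\<Sum>i'\<le>i. cc Kc (Rp p m n) f l k (i-i') * Cmat p m n lam kap mu A B l k (i'+1) r c)
            / (f l k - \<alpha> s)^(Rp p m n - i)) + (\<Sum>k\<in>K. poly (poly_shift R (U k)) (xx k s))"
    proof -
      have "(\<Sum>t<dd. D1 t) = (\<Sum>k\<in>K. (\<Sum>i<R. coeff (U k) i / xx k s ^ (R - i)) + poly (poly_shift R (U k)) (xx k s))"
        unfolding sD1 by (rule sum.cong[OF refl]) (rule poly_split_shift[OF nzs])
      also have "\<dots> = (\<Sum>k\<in>K. \<Sum>i<R. coeff (U k) i / xx k s ^ (R - i)) + (\<Sum>k\<in>K. poly (poly_shift R (U k)) (xx k s))"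
        by (rule sum.distrib)
      also have "(\<Sum>k\<in>K. \<Sum>i<R. coeff (U k) i / xx k s ^ (R - i)) = (\<Sum>k\<in>{1..Kc}. \<Sum>i<Rp p m n. (\<Sum>i'\<le>i. cc Kc (Rp p m n) f l k (i-i') * Cmat p m n lam kap mu A B l k (i'+1) r c)
            / (f l k - \<alpha> s)^(Rp p m n - i))"
        unfolding K_def xx_def R_def by (intro sum.cong refl) (simp add: cU[unfolded R_def])
      finally show ?thesis .
    qed
    show ?thesis unfolding mm[unfolded sD1', unfolded dd_def] g_def D234_def NN_def a_def b_def dd_def by simp
  qed
  show ?thesis
    using good_cong[OF good_g, of ?h] eqs unfolding T1 by simp
qed



lemma poly_sum_lt: "degree q < N \<Longrightarrow> (\<Sum>x\<in>{1..N}. y ^ (x - 1) * coeff q (x - 1)) = poly q (y::'a::comm_ring_1)"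
proof -
  assume d: "degree q < N"
  have "(\<Sum>x\<in>{1..N}. y ^ (x - 1) * coeff q (x - 1)) = (\<Sum>j<N. coeff q j * y ^ j)"
    unfolding sum_1n by (simp add: mult.commute)
  also have "\<dots> = (\<Sum>j\<le>degree q. coeff q j * y ^ j)"
    by (rule sum.mono_neutral_right) (use d in \<open>auto simp: coeff_eq_0\<close>)
  also have "\<dots> = poly q y" by (simp add: poly_altdef)
  finally show ?thesis .
qed

theorem mainTheorem2:
  fixes S X ell Kc p m n lam kap mu :: nat
    and f :: "nat \<Rightarrow> nat \<Rightarrow> 'a::{field, finite}"
    and \<alpha> :: "nat \<Rightarrow> 'a"
  assumes pos: "0 < S" "0 < X" "0 < ell" "0 < Kc" "0 < p" "0 < m" "0 < n"
               "0 < lam" "0 < kap" "0 < mu"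
    and dvds: "m dvd lam" "p dvd kap" "n dvd mu"
    and Lbound: "ell * Kc \<le> card (UNIV :: 'a set) - S"
    and f_inj: "inj_on (\<lambda>(l, k). f l k) ({1..ell} \<times> {1..Kc})"
    and \<alpha>_inj: "inj_on \<alpha> {1..S}"
    and f_\<alpha>: "\<And>l k s. l \<in> {1..ell} \<Longrightarrow> k \<in> {1..Kc} \<Longrightarrow> s \<in> {1..S} \<Longrightarrow> f l k \<noteq> \<alpha> s"
  shows
    \<comment> \<open>definition of C: P Q = sum_i C_{i+1} (f - alpha)^i\<close>
    "(\<forall>A B. \<forall>l\<in>{1..ell}. \<forall>k\<in>{1..Kc}. \<forall>s\<in>{1..S}. \<forall>r<lam div m. \<forall>c<mu div n.
        mmul (kap div p) (Pmat p m lam kap f \<alpha> A l k s) (Qmat p m n kap mu f \<alpha> B l k s) r c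
        = (\<Sum>i\<le>Rp p m n + p - 2. Cmat p m n lam kap mu A B l k (i + 1) r c * (f l k - \<alpha> s) ^ i))
     \<and> \<comment> \<open>(a)\<close>
     (\<forall>(A :: nat \<Rightarrow> nat \<Rightarrow> 'a fmat) B. \<forall>l\<in>{1..ell}. \<forall>k\<in>{1..Kc}. \<forall>m'\<in>{1..m}. \<forall>n''\<in>{1..n}. \<forall>r<lam div m. \<forall>c<mu div n.
        Cmat p m n lam kap mu A B l k (p + p * (m' - 1) + p * m * (n'' - 1)) r c
          = (\<Sum>p'\<in>{1..p}. mmul (kap div p) (blk (lam div m) (kap div p) (A l k) m' p')
                                           (blk (kap div p) (mu div n) (B l k) p' n'') r c)
        \<and> Cmat p m n lam kap mu A B l k (p + p * (m' - 1) + p * m * (n'' - 1)) r c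
          = blk (lam div m) (mu div n) (mmul kap (A l k) (B l k)) m' n'' r c)
     \<and> \<comment> \<open>(b)\<close>
     (\<exists>I :: (nat \<Rightarrow> nat \<Rightarrow> 'a fmat) \<Rightarrow> (nat \<Rightarrow> nat \<Rightarrow> 'a fmat) \<Rightarrow> (nat \<Rightarrow> nat \<Rightarrow> 'a fmat)
              \<Rightarrow> (nat \<Rightarrow> nat \<Rightarrow> 'a fmat) \<Rightarrow> nat \<Rightarrow> 'a fmat.
        (\<forall>A B A' B' ZA ZB. \<forall>x. Rp p m n * (Kc - 1) + X + DE p m n < x \<longrightarrow>
            I A B ZA ZB x = I A' B' ZA ZB x)
        \<and> (\<forall>A B ZA ZB Z' Z''.
             (\<forall>l\<in>{1..ell}. \<forall>k\<in>{1..Kc}. \<forall>i\<in>Eset p m n. \<forall>r<lam div m. \<forall>c<mu div n. Z'' l k i r c = 0)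
             \<longrightarrow> (\<forall>s\<in>{1..S}. \<forall>r<lam div m. \<forall>c<mu div n.
                   Ymat p m n lam kap mu X ell Kc f \<alpha> A B ZA ZB Z' Z'' s r c
                   = (\<Sum>l\<in>{1..ell}. \<Sum>k\<in>{1..Kc}. \<Sum>i<Rp p m n.
                        (\<Sum>i'\<le>i. cc Kc (Rp p m n) f l k (i - i')
                                   * (Cmat p m n lam kap mu A B l k (i' + 1) r c + Z'' l k (i' + 1) r c))
                        / (f l k - \<alpha> s) ^ (Rp p m n - i))
                     + (\<Sum>x\<in>{1..Rp p m n * Kc + 2 * X - 1}. \<alpha> s ^ (x - 1) *
                        (I A B ZA ZB x r c
                         + (if x \<le> Rp p m n * (Kc - 1) + X + DE p m n then Z' x r c else 0))))))"
proof -
  note pos' = pos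
  define R where "R = Rp p m n"
  define T where "T = Rp p m n * (Kc - 1) + X + DE p m n"
  define top where "top = Rp p m n * Kc + 2 * X - 1"
  have Rge: "p \<le> p*m" "p*m \<le> p*m*n" "1 \<le> p" using pos by auto
  have "p*m \<le> p*m*n" "p*m*n - p*m + p \<le> p*m*n" using Rge by linarith+
  then have "max (p*m) (p*m*n - p*m + p) \<le> p*m*n" by simp
  then have DEle: "DE p m n \<le> R - 1" unfolding DE_def R_def Rp_def using diff_le_mono by blast
  have RK: "R * (Kc - 1) + R = R * Kc" using pos by (cases Kc) auto
  have R1: "1 \<le> R" unfolding R_def Rp_def using pos by simp
  have Ttop: "T \<le> top" "1 \<le> T" unfolding T_def top_def R_def[symmetric] using DEle RK R1 pos by linarith+
  have C1: "\<forall>A B. \<forall>l\<in>{1..ell}. \<forall>k\<in>{1..Kc}. \<forall>s\<in>{1..S}. \<forall>r<lam div m. \<forall>c<mu div n.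
        mmul (kap div p) (Pmat p m lam kap f \<alpha> A l k s) (Qmat p m n kap mu f \<alpha> B l k s) r c
        = (\<Sum>i\<le>Rp p m n + p - 2. Cmat p m n lam kap mu A B l k (i + 1) r c * (f l k - \<alpha> s) ^ i)"
    using PQ_expand[OF pos(5,6,7)] by blast
  have C2: "\<forall>(A :: nat \<Rightarrow> nat \<Rightarrow> 'a fmat) B. \<forall>l\<in>{1..ell}. \<forall>k\<in>{1..Kc}. \<forall>m'\<in>{1..m}. \<forall>n''\<in>{1..n}. \<forall>r<lam div m. \<forall>c<mu div n.
        Cmat p m n lam kap mu A B l k (p + p * (m' - 1) + p * m * (n'' - 1)) r c
          = (\<Sum>p'\<in>{1..p}. mmul (kap div p) (blk (lam div m) (kap div p) (A l k) m' p')
                                           (blk (kap div p) (mu div n) (B l k) p' n'') r c)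
        \<and> Cmat p m n lam kap mu A B l k (p + p * (m' - 1) + p * m * (n'' - 1)) r c
          = blk (lam div m) (mu div n) (mmul kap (A l k) (B l k)) m' n'' r c"
    apply (intro allI ballI impI conjI)
     apply (rule Cmat_diag[OF pos(5,6,7)]; simp)
    apply (rule trans[OF Cmat_diag[OF pos(5,6,7)] blk_mmul[OF pos(5) dvds(2), where m=m and n=n]]; simp)
    done
  define NEG where "NEG = (\<lambda>A B (r::nat) (c::nat) (s::nat). (\<Sum>l\<in>{1..ell}. \<Sum>k\<in>{1..Kc}. \<Sum>i<Rp p m n.
      (\<Sum>i'\<le>i. cc Kc (Rp p m n) f l k (i-i') * Cmat p m n lam kap mu A B l k (i'+1) r c)
            / (f l k - \<alpha> s)^(Rp p m n - i)))"
  define Hf where "Hf = (\<lambda>A B ZA ZB (r::nat) (c::nat) (s::nat). (\<Sum>l\<in>{1..ell}. mmul (kap div p) (Atil p m n lam kap X Kc f \<alpha> A ZA l s)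
        (Btil p m n kap mu X Kc f \<alpha> B ZB l s) r c) - NEG A B r c s)"
  define Nf where "Nf = (\<lambda>(ZA::nat \<Rightarrow> nat \<Rightarrow> 'a fmat) (ZB::nat \<Rightarrow> nat \<Rightarrow> 'a fmat) (r::nat) (c::nat) (s::nat). \<Sum>l\<in>{1..ell}. \<Sum>t<kap div p.
     Delta Kc (Rp p m n) f l (\<alpha> s) * (\<Sum>x\<in>{1..X}. \<alpha> s^(x-1) * ZA l x r t) * (\<Sum>x\<in>{1..X}. \<alpha> s^(x-1) * ZB l x t c))"
  define Nq where "Nq = (\<lambda>ZA ZB r c. SOME q. degree q \<le> top - 1 \<and> (\<forall>s\<in>{1..S}. Nf ZA ZB r c s = poly q (\<alpha> s)))"
  define Hq where "Hq = (\<lambda>A B ZA ZB r c. SOME q. degree q \<le> top - 1 \<and> degree (q - Nq ZA ZB r c) \<le> T - 1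
        \<and> (\<forall>s\<in>{1..S}. Hf A B ZA ZB r c s = poly q (\<alpha> s)))"
  define I where "I = (\<lambda>(A :: nat \<Rightarrow> nat \<Rightarrow> 'a fmat) (B :: nat \<Rightarrow> nat \<Rightarrow> 'a fmat) (ZA :: nat \<Rightarrow> nat \<Rightarrow> 'a fmat) (ZB :: nat \<Rightarrow> nat \<Rightarrow> 'a fmat) x r c.
        if x \<le> T then coeff (Hq A B ZA ZB r c) (x-1) else coeff (Nq ZA ZB r c) (x-1))"
  have Nq_prop: "degree (Nq ZA ZB r c) \<le> top - 1 \<and> (\<forall>s\<in>{1..S}. Nf ZA ZB r c s = poly (Nq ZA ZB r c) (\<alpha> s))" for ZA ZB r c
  proof -
    have "good S \<alpha> (top - 1) (Nf ZA ZB r c)"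
    proof -
      have "top - 1 = Rp p m n * Kc + 2*X - 2" unfolding top_def by simp
      then show ?thesis unfolding Nf_def by (simp only:) (rule G1[OF pos(2)])
    qed
    then show ?thesis unfolding Nq_def good_def by (rule someI_ex)
  qed
  have Hq_prop: "degree (Hq A B ZA ZB r c) \<le> top - 1 \<and> degree (Hq A B ZA ZB r c - Nq ZA ZB r c) \<le> T - 1
        \<and> (\<forall>s\<in>{1..S}. Hf A B ZA ZB r c s = poly (Hq A B ZA ZB r c) (\<alpha> s))" for A B ZA ZB r c
  proof -
    have "good S \<alpha> (T - 1) (\<lambda>s. \<Sum>l\<in>{1..ell}.
      mmul (kap div p) (Atil p m n lam kap X Kc f \<alpha> A ZA l s) (Btil p m n kap mu X Kc f \<alpha> B ZB l s) r c
      - (\<Sum>k\<in>{1..Kc}. \<Sum>i<Rp p m n. (\<Sum>i'\<le>i. cc Kc (Rp p m n) f l k (i-i') * Cmat p m n lam kap mu A B l k (i'+1) r c)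
            / (f l k - \<alpha> s)^(Rp p m n - i))
      - (\<Sum>t<kap div p. Delta Kc (Rp p m n) f l (\<alpha> s) * (\<Sum>x\<in>{1..X}. \<alpha> s^(x-1) * ZA l x r t)
            * (\<Sum>x\<in>{1..X}. \<alpha> s^(x-1) * ZB l x t c)))"
      unfolding T_def
      by (intro good_sum finite_atLeastAtMost G2_l[OF pos(5,6,7,2,4)]) (use f_\<alpha> in auto)
    then have "good S \<alpha> (T - 1) (\<lambda>s. Hf A B ZA ZB r c s - Nf ZA ZB r c s)"
      by (rule good_cong) (simp add: Hf_def Nf_def NEG_def sum_subtractf)
    then obtain q1 where q1: "degree q1 \<le> T - 1" "\<forall>s\<in>{1..S}. Hf A B ZA ZB r c s - Nf ZA ZB r c s = poly q1 (\<alpha> s)"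
      unfolding good_def by blast
    have ex: "\<exists>q. degree q \<le> top - 1 \<and> degree (q - Nq ZA ZB r c) \<le> T - 1
        \<and> (\<forall>s\<in>{1..S}. Hf A B ZA ZB r c s = poly q (\<alpha> s))"
    proof (intro exI[of _ "q1 + Nq ZA ZB r c"] conjI ballI)
      show "degree (q1 + Nq ZA ZB r c) \<le> top - 1"
        using degree_add_le[of q1 "top - 1" "Nq ZA ZB r c"] q1(1) Nq_prop Ttop by auto
      show "degree (q1 + Nq ZA ZB r c - Nq ZA ZB r c) \<le> T - 1" using q1 by simp
      fix s assume "s \<in> {1..S}"
      then show "Hf A B ZA ZB r c s = poly (q1 + Nq ZA ZB r c) (\<alpha> s)"
        using q1(2) Nq_prop by (simp add: algebra_simps)
    qed
    show ?thesis unfolding Hq_def by (rule someI_ex[OF ex])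
  qed
  have Isum: "(\<Sum>x\<in>{1..top}. \<alpha> s ^ (x - 1) * I A B ZA ZB x r c) = Hf A B ZA ZB r c s" if s: "s \<in> {1..S}" for A B ZA ZB r c s
  proof -
    have "(\<Sum>x\<in>{1..top}. \<alpha> s ^ (x - 1) * I A B ZA ZB x r c) = (\<Sum>x\<in>{1..top}. \<alpha> s ^ (x - 1) * coeff (Hq A B ZA ZB r c) (x - 1))"
    proof (intro sum.cong refl)
      fix x assume "x \<in> {1..top}"
      show "\<alpha> s ^ (x - 1) * I A B ZA ZB x r c = \<alpha> s ^ (x - 1) * coeff (Hq A B ZA ZB r c) (x - 1)"
      proof (cases "x \<le> T")
        case False
        then have "coeff (Hq A B ZA ZB r c - Nq ZA ZB r c) (x - 1) = 0"
          using Hq_prop[of A B ZA ZB r c] Ttop by (intro coeff_eq_0) linarith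
        then show ?thesis using False unfolding I_def by simp
      qed (simp add: I_def)
    qed
    also have "\<dots> = poly (Hq A B ZA ZB r c) (\<alpha> s)"
      by (rule poly_sum_lt) (use Hq_prop[of A B ZA ZB r c] Ttop in linarith)
    finally show ?thesis using Hq_prop[of A B ZA ZB r c] s by simp
  qed
  have C3: "(\<forall>A B A' B' ZA ZB. \<forall>x. T < x \<longrightarrow> I A B ZA ZB x = I A' B' ZA ZB x)"
    unfolding I_def by simp
  have C4: "Ymat p m n lam kap mu X ell Kc f \<alpha> A B ZA ZB Z' Z'' s r c
                   = (\<Sum>l\<in>{1..ell}. \<Sum>k\<in>{1..Kc}. \<Sum>i<Rp p m n.
                        (\<Sum>i'\<le>i. cc Kc (Rp p m n) f l k (i - i')
                                   * (Cmat p m n lam kap mu A B l k (i' + 1) r c + Z'' l k (i' + 1) r c))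
                        / (f l k - \<alpha> s) ^ (Rp p m n - i))
                     + (\<Sum>x\<in>{1..Rp p m n * Kc + 2 * X - 1}. \<alpha> s ^ (x - 1) *
                        (I A B ZA ZB x r c
                         + (if x \<le> Rp p m n * (Kc - 1) + X + DE p m n then Z' x r c else 0)))"
    if s: "s \<in> {1..S}" for A B ZA ZB Z' Z'' s r c
  proof -
    have Zs: "(\<Sum>x\<in>{1..top}. \<alpha> s ^ (x - 1) * (if x \<le> T then Z' x r c else 0)) = (\<Sum>x\<in>{1..T}. \<alpha> s ^ (x - 1) * Z' x r c)"
    proof -
      have "(\<Sum>x\<in>{1..top}. \<alpha> s ^ (x - 1) * (if x \<le> T then Z' x r c else 0))
          = (\<Sum>x\<in>{1..top}. if x \<le> T then \<alpha> s ^ (x - 1) * Z' x r c else 0)"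
        by (intro sum.cong refl) simp
      also have "\<dots> = (\<Sum>x\<in>{x\<in>{1..top}. x \<le> T}. \<alpha> s ^ (x - 1) * Z' x r c)"
        by (simp only: sum.inter_filter[OF finite_atLeastAtMost])
      also have "{x\<in>{1..top}. x \<le> T} = {1..T}" using Ttop by auto
      finally show ?thesis .
    qed
    have split: "(\<Sum>l\<in>{1..ell}. \<Sum>k\<in>{1..Kc}. \<Sum>i<Rp p m n.
                        (\<Sum>i'\<le>i. cc Kc (Rp p m n) f l k (i - i')
                                   * (Cmat p m n lam kap mu A B l k (i' + 1) r c + Z'' l k (i' + 1) r c))
                        / (f l k - \<alpha> s) ^ (Rp p m n - i))
         = NEG A B r c s + (\<Sum>l\<in>{1..ell}. \<Sum>k\<in>{1..Kc}. \<Sum>i<Rp p m n.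
           (\<Sum>i'\<le>i. cc Kc (Rp p m n) f l k (i - i') * Z'' l k (i' + 1) r c)
             / (f l k - \<alpha> s) ^ (Rp p m n - i))"
      unfolding NEG_def sum.distrib[symmetric]
      by (intro sum.cong refl) (simp add: distrib_left sum.distrib add_divide_distrib)
    show ?thesis
      unfolding split unfolding top_def[symmetric] T_def[symmetric] unfolding distrib_left sum.distrib
      unfolding Isum[OF s] Zs
      unfolding Ymat_def Mtil_def Hf_def T_def by simp
  qed
  show ?thesis
    apply (intro conjI C1 C2)
    apply (rule exI[of _ I])
    apply (intro conjI)
    using C3 unfolding T_def apply blast
    using C4 by blast
qed


end
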